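(* Let $L>0$, $\Omega=\mathbb{T}=(-L/2,L/2]$ with periodic boundary conditions, and let $W,W_0\in H^2(\Omega)$ be even, $L$-periodic functions with $\int_\Omega W\,dx=\int_\Omega W_0\,dx$. Suppose $u^*\in C^2(\Omega)$ is $L$-periodic, strictly positive on $\Omega$, satisfies $\int_\Omega u^*\,dx=1$, and solves both stationary equations $$0=\partial_x\big(\partial_x u^*+u^*\,\partial_x(W*u^* )\big)\quad\text{and}\quad 0=\partial_x\big(\partial_x u^*+u^*\,\partial_x(W_0*u^* )\big)\qquad\text{on }\Omega.$$ Then $W*u^*=W_0*u^*$ on $\Omega$, and consequently $\widehat W(k)=\widehat{W_0}(k)$ for every $k\in\mathbb{Z}$ such that $\widehat{u^*}(k)\neq 0$. In particular, if $\widehat{u^*}(k)\neq0$ for all $k\in\mathbb{Z}\setminus\{0\}$, then $W=W_0$ almost everywhere.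
   Context: Convolution on the torus: $(f*g)(x)=\int_\Omega f(x-y)g(y)\,dy$ with $f$ extended periodically. For an $L$-periodic function $f$, $\widehat f(k)=\int_\Omega f(x)e^{-2\pi i kx/L}\,dx$ denotes its $k$-th Fourier coefficient. $H^2(\Omega)$ is the Sobolev space of functions with weak derivatives up to order 2 in $L^2(\Omega)$. *)

theory Defs
  imports "HOL-Analysis.Analysis"
begin

definition Omega :: "real \<Rightarrow> real set" where
  "Omega L = {-L/2<..L/2}"

definition periodic :: "real \<Rightarrow> (real \<Rightarrow> 'a) \<Rightarrow> bool" where
  "periodic L f \<longleftrightarrow> (\<forall>x. f (x + L) = f x)"

definition even_fun :: "(real \<Rightarrow> real) \<Rightarrow> bool" where
  "even_fun f \<longleftrightarrow> (\<forall>x. f (- x) = f x)"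

text \<open>Convolution on the torus, f extended periodically (f is assumed periodic).\<close>
definition conv :: "real \<Rightarrow> (real \<Rightarrow> real) \<Rightarrow> (real \<Rightarrow> real) \<Rightarrow> real \<Rightarrow> real" where
  "conv L f g x = (LINT y:Omega L|lebesgue. f (x - y) * g y)"

definition fourier_coeff :: "real \<Rightarrow> (real \<Rightarrow> real) \<Rightarrow> int \<Rightarrow> complex" where
  "fourier_coeff L f k =
     (LINT x:Omega L|lebesgue. complex_of_real (f x) * exp (- (2 * pi * \<i> * of_int k * of_real x / of_real L)))"

definition L2_on :: "real set \<Rightarrow> (real \<Rightarrow> real) \<Rightarrow> bool" where
  "L2_on S f \<longleftrightarrow> f \<in> borel_measurable (restrict_space lebesgue S)
                 \<and> set_integrable lebesgue S (\<lambda>x. (f x)\<^sup>2)"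

definition smooth_periodic :: "real \<Rightarrow> (real \<Rightarrow> real) \<Rightarrow> bool" where
  "smooth_periodic L \<phi> \<longleftrightarrow> periodic L \<phi> \<and> (\<forall>k x. ((deriv ^^ k) \<phi>) differentiable at x)"

definition H2_per :: "real \<Rightarrow> (real \<Rightarrow> real) \<Rightarrow> bool" where
  "H2_per L f \<longleftrightarrow> L2_on (Omega L) f \<and>
     (\<exists>f1 f2. L2_on (Omega L) f1 \<and> L2_on (Omega L) f2 \<and>
        (\<forall>\<phi>. smooth_periodic L \<phi> \<longrightarrow>
           (LINT x:Omega L|lebesgue. f x * deriv \<phi> x) = - (LINT x:Omega L|lebesgue. f1 x * \<phi> x) \<and>
           (LINT x:Omega L|lebesgue. f1 x * deriv \<phi> x) = - (LINT x:Omega L|lebesgue. f2 x * \<phi> x)))"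

text \<open>u is C^2 (classically, on all of \<real>; u is periodic so this is C^2 on the torus).\<close>
definition C2 :: "(real \<Rightarrow> real) \<Rightarrow> bool" where
  "C2 u \<longleftrightarrow> (\<forall>x. u differentiable at x) \<and> (\<forall>x. deriv u differentiable at x)
            \<and> continuous_on UNIV (deriv (deriv u))"

end

theory Submission
  imports Defs
begin

lemma lebesgue_sigma_finite: "sigma_finite_measure (lebesgue :: real measure)"
proof -
  have U: "\<Union> (range (\<lambda>n::nat. {-real n..real n})) = (UNIV::real set)"
  proof (auto)
    fix x :: real
    obtain n :: nat where "\<bar>x\<bar> \<le> real n" using real_arch_simple by blast
    then show "\<exists>n. - real n \<le> x \<and> x \<le> real n" by (intro exI[of _ n]) auto
  qed
  have F: "\<forall>a\<in>range (\<lambda>n::nat. {- real n..real n}). emeasure lebesgue a \<noteq> \<infinity>"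
    using lmeasurable_cbox[of "-real n" "real n" for n] by (auto simp: fmeasurable_def)
  show ?thesis unfolding sigma_finite_measure_def
    by (rule exI[of _ "range (\<lambda>n::nat. {-real n..real n})"]) (use U F in auto)
qed

lemma pair_sigma_finite_lebesgue: "pair_sigma_finite (lebesgue :: real measure) (lebesgue :: real measure)"
  unfolding pair_sigma_finite_def using lebesgue_sigma_finite by auto

lemma set_integrable_affine:
  fixes f :: "real \<Rightarrow> 'a::euclidean_space"
  assumes c: "c \<noteq> 0" and f: "set_integrable lebesgue T f"
  shows "set_integrable lebesgue {x. t + c*x \<in> T} (\<lambda>x. f (t + c*x))"
    and "(LINT x:{x. t + c*x \<in> T}|lebesgue. f (t + c*x)) = (LINT x:T|lebesgue. f x) /\<^sub>R \<bar>c\<bar>"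
proof -
  have i: "has_bochner_integral lebesgue (\<lambda>x. indicator T x *\<^sub>R f x) (LINT x:T|lebesgue. f x)"
    using f unfolding set_integrable_def set_lebesgue_integral_def
    by (simp add: has_bochner_integral_integrable)
  have eq: "(\<lambda>x. indicator T (t + c*x) *\<^sub>R f (t+c*x)) = (\<lambda>x. indicator {x. t + c*x \<in> T} x *\<^sub>R f (t + c*x))"
    by (auto simp: indicator_def fun_eq_iff)
  have "has_bochner_integral lebesgue (\<lambda>x. indicator {x. t + c*x \<in> T} x *\<^sub>R f (t + c*x)) ((LINT x:T|lebesgue. f x) /\<^sub>R \<bar>c\<bar>)"
    using has_bochner_integral_lebesgue_real_affine_iff[OF c, of "\<lambda>x. indicator T x *\<^sub>R f x" _ t] i
    by (simp add: eq)
  then show "set_integrable lebesgue {x. t + c*x \<in> T} (\<lambda>x. f (t + c*x))"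
    "(LINT x:{x. t + c*x \<in> T}|lebesgue. f (t + c*x)) = (LINT x:T|lebesgue. f x) /\<^sub>R \<bar>c\<bar>"
    unfolding set_integrable_def set_lebesgue_integral_def using has_bochner_integral_iff by blast+
qed

lemma set_integrable_shift:
  fixes f :: "real \<Rightarrow> 'a::euclidean_space"
  assumes f: "set_integrable lebesgue {a<..b} f"
  shows "set_integrable lebesgue {a-s<..b-s} (\<lambda>x. f (x + s))"
    and "(LINT x:{a-s<..b-s}|lebesgue. f (x + s)) = (LINT x:{a<..b}|lebesgue. f x)"
proof -
  have e: "{x. s + 1*x \<in> {a<..b}} = {a-s<..b-s}" by auto
  show "set_integrable lebesgue {a-s<..b-s} (\<lambda>x. f (x + s))"
    using set_integrable_affine(1)[of 1 "{a<..b}" f s] f unfolding e by (simp add: add.commute)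
  show "(LINT x:{a-s<..b-s}|lebesgue. f (x + s)) = (LINT x:{a<..b}|lebesgue. f x)"
    using set_integrable_affine(2)[of 1 "{a<..b}" f s] f unfolding e by (simp add: add.commute)
qed

lemma periodic_shift_step:
  fixes f :: "real \<Rightarrow> 'a::euclidean_space"
  assumes per: "\<And>x. f (x + L) = f x" and L: "L > 0"
    and int: "set_integrable lebesgue {a<..a+L} f" and c: "\<bar>c - a\<bar> \<le> L"
  shows "set_integrable lebesgue {c<..c+L} f \<and> (LINT x:{c<..c+L}|lebesgue. f x) = (LINT x:{a<..a+L}|lebesgue. f x)"
proof (cases "a \<le> c")
  case True
  have i1: "set_integrable lebesgue {a<..c} f" by (rule set_integrable_subset[OF int]) (use c True in auto)
  have i2: "set_integrable lebesgue {c<..a+L} f" by (rule set_integrable_subset[OF int]) (use c True in auto)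
  have i3: "set_integrable lebesgue {a+L<..c+L} (\<lambda>x. f (x + -L))"
    using set_integrable_shift(1)[OF i1, of "-L"] by simp
  have e3: "(LINT x:{a+L<..c+L}|lebesgue. f (x + -L)) = (LINT x:{a<..c}|lebesgue. f x)"
    using set_integrable_shift(2)[OF i1, of "-L"] by simp
  have pf: "f (x - L) = f x" for x using per[of "x - L"] by simp
  have i3': "set_integrable lebesgue {a+L<..c+L} f" using i3 by (simp add: pf)
  have e3': "(LINT x:{a+L<..c+L}|lebesgue. f x) = (LINT x:{a<..c}|lebesgue. f x)" using e3 by (simp add: pf)
  have U1: "{c<..c+L} = {c<..a+L} \<union> {a+L<..c+L}" using c True by auto
  have U2: "{a<..a+L} = {a<..c} \<union> {c<..a+L}" using c True by auto
  have "set_integrable lebesgue {c<..c+L} f" unfolding U1 by (rule set_integrable_Un[OF i2 i3']) auto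
  moreover have "(LINT x:{c<..c+L}|lebesgue. f x) = (LINT x:{a<..a+L}|lebesgue. f x)"
    unfolding U1 U2 by (subst set_integral_Un[OF _ i2 i3'], simp, subst set_integral_Un[OF _ i1 i2], auto simp: e3')
  ultimately show ?thesis by blast
next
  case False
  have i1: "set_integrable lebesgue {c+L<..a+L} f" by (rule set_integrable_subset[OF int]) (use c False in auto)
  have i2: "set_integrable lebesgue {a<..c+L} f" by (rule set_integrable_subset[OF int]) (use c False in auto)
  have i3: "set_integrable lebesgue {c<..a} (\<lambda>x. f (x + L))"
    using set_integrable_shift(1)[OF i1, of "L"] by simp
  have e3: "(LINT x:{c<..a}|lebesgue. f (x + L)) = (LINT x:{c+L<..a+L}|lebesgue. f x)"
    using set_integrable_shift(2)[OF i1, of "L"] by simp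
  have i3': "set_integrable lebesgue {c<..a} f" using i3 by (simp add: per)
  have e3': "(LINT x:{c<..a}|lebesgue. f x) = (LINT x:{c+L<..a+L}|lebesgue. f x)" using e3 by (simp add: per)
  have U1: "{c<..c+L} = {c<..a} \<union> {a<..c+L}" using c False by auto
  have U2: "{a<..a+L} = {a<..c+L} \<union> {c+L<..a+L}" using c False by auto
  have "set_integrable lebesgue {c<..c+L} f" unfolding U1 by (rule set_integrable_Un[OF i3' i2]) auto
  moreover have "(LINT x:{c<..c+L}|lebesgue. f x) = (LINT x:{a<..a+L}|lebesgue. f x)"
    unfolding U1 U2 by (subst set_integral_Un[OF _ i3' i2], simp, subst set_integral_Un[OF _ i2 i1], auto simp: e3')
  ultimately show ?thesis by blast
qed

lemma periodic_shift:
  fixes f :: "real \<Rightarrow> 'a::euclidean_space"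
  assumes per: "\<And>x. f (x + L) = f x" and L: "L > 0"
    and int: "set_integrable lebesgue {a<..a+L} f"
  shows "set_integrable lebesgue {c<..c+L} f \<and> (LINT x:{c<..c+L}|lebesgue. f x) = (LINT x:{a<..a+L}|lebesgue. f x)"
proof -
  have "\<forall>c. \<bar>c - a\<bar> \<le> real n * L \<longrightarrow> set_integrable lebesgue {c<..c+L} f \<and> (LINT x:{c<..c+L}|lebesgue. f x) = (LINT x:{a<..a+L}|lebesgue. f x)" for n
  proof (induction n)
    case 0
    then show ?case using int by auto
  next
    case (Suc n)
    show ?case
    proof (intro allI impI)
      fix c assume c: "\<bar>c - a\<bar> \<le> real (Suc n) * L"
      show "set_integrable lebesgue {c<..c+L} f \<and> (LINT x:{c<..c+L}|lebesgue. f x) = (LINT x:{a<..a+L}|lebesgue. f x)"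
      proof (cases "\<bar>c - a\<bar> \<le> real n * L")
        case True then show ?thesis using Suc.IH by blast
      next
        case F0: False
        show ?thesis
      proof (cases "\<bar>c - a\<bar> \<le> L")
        case True then show ?thesis using periodic_shift_step[OF per L int] by blast
      next
        case False
        define c' where "c' = (if c > a then c - L else c + L)"
        have "\<bar>c' - a\<bar> \<le> real n * L" using c False L unfolding c'_def by (auto simp: algebra_simps abs_if split: if_splits)
        then have P: "set_integrable lebesgue {c'<..c'+L} f \<and> (LINT x:{c'<..c'+L}|lebesgue. f x) = (LINT x:{a<..a+L}|lebesgue. f x)"
          using Suc.IH by blast
        have "\<bar>c - c'\<bar> \<le> L" using L unfolding c'_def by auto
        then show ?thesis using periodic_shift_step[OF per L conjunct1[OF P]] P by auto
      qed
      qed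
    qed
  qed
  moreover obtain n :: nat where "\<bar>c - a\<bar> / L \<le> real n" using real_arch_simple by blast
  then have "\<bar>c - a\<bar> \<le> real n * L" using L by (simp add: divide_le_eq)
  ultimately show ?thesis by blast
qed

lemma Omega_eq: "Omega L = {-L/2<..-L/2+L}" by (simp add: Omega_def)

lemma Omega_lmeas: "Omega L \<in> lmeasurable"
  unfolding Omega_def by (rule bounded_set_imp_lmeasurable) auto

lemma Omega_sets[measurable]: "Omega L \<in> sets lebesgue"
  using Omega_lmeas fmeasurable_def by blast

lemma abs_le_1_sq: "\<bar>a::real\<bar> \<le> 1 + a\<^sup>2"
proof -
  have "0 \<le> (\<bar>a\<bar> - 1)\<^sup>2" by simp
  then have "0 \<le> \<bar>a\<bar>*\<bar>a\<bar> - 2*\<bar>a\<bar> + 1" by (simp add: power2_eq_square algebra_simps)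
  moreover have "\<bar>a\<bar>*\<bar>a\<bar> = a\<^sup>2" by (simp add: power2_eq_square)
  moreover have "0 \<le> a\<^sup>2" by simp
  ultimately show ?thesis by linarith
qed

lemma L2_imp_integrable:
  assumes "L2_on (Omega L) W"
  shows "set_integrable lebesgue (Omega L) W"
proof -
  have m: "set_borel_measurable lebesgue (Omega L) W"
    using assms unfolding L2_on_def set_borel_measurable_def
    by (subst (asm) borel_measurable_restrict_space_iff) auto
  have "set_integrable lebesgue (Omega L) (\<lambda>x. 1 + (W x)\<^sup>2)"
    using assms unfolding L2_on_def
    by (intro set_integral_add absolutely_integrable_on_const Omega_lmeas) auto
  then show ?thesis
    by (rule set_integrable_bound[OF _ m]) (auto simp: abs_le_1_sq intro!: always_eventually)
qed

lemma periodic_int: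
  assumes "periodic L f"
  shows "f (x + of_int n * L) = f x"
proof -
  have nat: "f (y + real m * L) = f y" for y m
  proof (induction m)
    case (Suc m)
    have "f (y + real (Suc m) * L) = f ((y + real m * L) + L)" by (simp add: algebra_simps)
    also have "\<dots> = f (y + real m * L)" using assms by (simp add: periodic_def)
    finally show ?case using Suc by simp
  qed simp
  show ?thesis
  proof (cases "n \<ge> 0")
    case True then show ?thesis using nat[of x "nat n"] by simp
  next
    case False
    have "f ((x + of_int n * L) + real (nat (-n)) * L) = f (x + of_int n * L)" by (rule nat)
    moreover have "(x + of_int n * L) + real (nat (-n)) * L = x" using False by simp
    ultimately show ?thesis by simp
  qed
qed

lemma periodic_bounded:
  fixes g :: "real \<Rightarrow> 'a::real_normed_vector"
  assumes "periodic L g" "continuous_on UNIV g" "L > 0"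
  shows "\<exists>B\<ge>0. \<forall>y. norm (g y) \<le> B"
proof -
  have "compact (g ` {0..L})" by (rule compact_continuous_image) (use assms(2) continuous_on_subset in auto)
  then obtain B where B: "\<forall>v\<in>g ` {0..L}. norm v \<le> B" using compact_imp_bounded bounded_iff by metis
  have nB: "norm (g y) \<le> B" for y
  proof -
    define n where "n = \<lfloor>y / L\<rfloor>"
    define y' where "y' = y - of_int n * L"
    have "y' \<in> {0..L}"
      using assms(3) unfolding y'_def n_def
      using floor_divide_lower[OF assms(3), of y] floor_divide_upper[OF assms(3), of y]
      by (auto simp: algebra_simps)
    moreover have "g y = g y'" using periodic_int[OF assms(1), of y' n] unfolding y'_def by simp
    ultimately show ?thesis using B by auto
  qed
  moreover have "B \<ge> 0" using nB[of 0] norm_ge_zero order_trans by blast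
  ultimately show ?thesis by blast
qed

lemma cont_meas [measurable]:
  fixes g :: "real \<Rightarrow> 'a::{second_countable_topology, real_normed_vector}"
  assumes "continuous_on UNIV g"
  shows "g \<in> borel_measurable lebesgue"
  by (rule measurable_completion) (simp add: measurable_lborel1 borel_measurable_continuous_onI assms)

lemma set_integrable_scaleR_bounded:
  fixes W :: "real \<Rightarrow> real" and h :: "real \<Rightarrow> 'b::{banach, second_countable_topology}"
  assumes iW: "set_integrable lebesgue S W" and hm: "h \<in> borel_measurable lebesgue"
    and hB: "\<And>z. norm (h z) \<le> B"
  shows "set_integrable lebesgue S (\<lambda>z. W z *\<^sub>R h z)"
proof -
  have mW: "(\<lambda>z. indicator S z *\<^sub>R W z) \<in> borel_measurable lebesgue"
    using iW unfolding set_integrable_def by (rule borel_measurable_integrable)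
  have m: "set_borel_measurable lebesgue S (\<lambda>z. W z *\<^sub>R h z)"
    unfolding set_borel_measurable_def
  proof -
    have "(\<lambda>z. (indicator S z *\<^sub>R W z) *\<^sub>R h z) \<in> borel_measurable lebesgue"
      using mW hm by (rule borel_measurable_scaleR)
    then show "(\<lambda>z. indicat_real S z *\<^sub>R W z *\<^sub>R h z) \<in> borel_measurable lebesgue" by simp
  qed
  have "set_integrable lebesgue S (\<lambda>z. B * W z)" using iW by auto
  then show ?thesis
  proof (rule set_integrable_bound[OF _ m], intro always_eventually allI impI)
    fix z
    have B0: "B \<ge> 0" using hB[of 0] norm_ge_zero order_trans by blast
    have "norm (W z *\<^sub>R h z) \<le> \<bar>W z\<bar> * B" using hB[of z] by (simp add: mult_left_mono)
    also have "\<dots> \<le> norm (B * W z)" using B0 by (simp add: abs_mult)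
    finally show "norm (W z *\<^sub>R h z) \<le> norm (B * W z)" .
  qed
qed

lemma periodic_shift_Omega:
  fixes f :: "real \<Rightarrow> 'a::euclidean_space"
  assumes per: "periodic L f" and L: "L > 0"
    and int: "set_integrable lebesgue (Omega L) f"
  shows "set_integrable lebesgue {c<..c+L} f \<and> (LINT x:{c<..c+L}|lebesgue. f x) = (LINT x:Omega L|lebesgue. f x)"
  using periodic_shift[of f L "-L/2" c] per L int unfolding Omega_eq periodic_def by auto

lemma cont_shift: 
  fixes g :: "real \<Rightarrow> 'b::topological_space"
  assumes "continuous_on UNIV g" shows "continuous_on UNIV (\<lambda>z. g (x - z))"
proof -
  have c1: "continuous_on UNIV (\<lambda>z::real. x - z)" by (intro continuous_intros)
  have "continuous_on UNIV (g \<circ> (\<lambda>z. x - z))"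
    by (rule continuous_on_compose[OF c1]) (rule continuous_on_subset[OF assms], simp)
  then show ?thesis by (simp add: o_def)
qed

lemma conv_alt:
  assumes L: "L > 0" and pW: "periodic L W" and iW: "set_integrable lebesgue (Omega L) W"
    and cg: "continuous_on UNIV g" and pg: "periodic L g"
  shows "set_integrable lebesgue (Omega L) (\<lambda>z. W z * g (x - z))"
    and "conv L W g x = (LINT z:Omega L|lebesgue. W z * g (x - z))"
proof -
  define h where "h z = W z * g (x - z)" for z
  have ph: "periodic L h"
    unfolding periodic_def h_def
  proof
    fix z
    have "g (x - (z + L)) = g (x - z)" using pg unfolding periodic_def by (metis diff_add_cancel diff_diff_eq)
    then show "W (z + L) * g (x - (z + L)) = W z * g (x - z)" using pW unfolding periodic_def by simp
  qed
  obtain B where B: "\<And>y. norm (g (x - y)) \<le> B" using periodic_bounded[OF pg cg L] by auto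
  have ih: "set_integrable lebesgue (Omega L) h"
    using set_integrable_scaleR_bounded[OF iW cont_meas[OF cont_shift[OF cg]] B]
    unfolding h_def by simp
  then show "set_integrable lebesgue (Omega L) (\<lambda>z. W z * g (x - z))" unfolding h_def .
  have per: "set_integrable lebesgue {c<..c+L} h \<and> (LINT x:{c<..c+L}|lebesgue. h x) = (LINT x:Omega L|lebesgue. h x)" for c
    by (rule periodic_shift_Omega[OF ph L ih])
  define T where "T = {x - L/2..<x + L/2}"
  have p1: "set_integrable lebesgue {x-L/2-L<..x-L/2-L+L} h" using per by blast
  have p2: "set_integrable lebesgue {x-L/2<..x-L/2+L} h" using per by blast
  have "set_integrable lebesgue ({x-L/2-L<..x-L/2-L+L} \<union> {x - L/2<..x-L/2+L}) h"
    by (rule set_integrable_Un[OF p1 p2]) auto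
  then have iT: "set_integrable lebesgue T h"
    by (rule set_integrable_subset) (auto simp: T_def)
  have eT: "{y. x + -1 * y \<in> T} = Omega L" by (auto simp: T_def Omega_def)
  have hx: "h (x + -1 * y) = W (x - y) * g y" for y by (simp add: h_def)
  have "conv L W g x = (LINT y:{y. x + -1 * y \<in> T}|lebesgue. h (x + -1 * y))"
    unfolding eT hx conv_def ..
  also have "\<dots> = (LINT y:T|lebesgue. h y)"
    using set_integrable_affine(2)[of "-1" T h x] iT by simp
  also have "\<dots> = (LINT y:{x-L/2<..x-L/2+L}|lebesgue. h y)"
  proof (rule set_integral_cong_set)
    show "set_borel_measurable lebesgue {x-L/2<..x-L/2+L} h"
      using per[of "x - L/2"] by (simp add: set_integrable_def set_borel_measurable_def borel_measurable_integrable)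
    show "set_borel_measurable lebesgue T h"
      using iT by (simp add: set_integrable_def set_borel_measurable_def borel_measurable_integrable)
    have "AE y in lborel. y \<notin> {x - L/2, x + L/2}"
      by (rule AE_not_in) (rule finite_imp_null_set_lborel, simp)
    then have "AE y in lebesgue. y \<notin> {x - L/2, x + L/2}" by (rule AE_completion)
    then show "AE y in lebesgue. (y \<in> {x-L/2<..x-L/2+L}) = (y \<in> T)"
      by eventually_elim (auto simp: T_def)
  qed
  also have "\<dots> = (LINT z:Omega L|lebesgue. h z)" using per[of "x - L/2"] by simp
  finally show "conv L W g x = (LINT z:Omega L|lebesgue. W z * g (x - z))" unfolding h_def .
qed

lemma mvt_bound:
  fixes u u1 :: "real \<Rightarrow> real"
  assumes d: "\<And>s. (u has_real_derivative u1 s) (at s)"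
    and b: "\<And>s. \<bar>s - a\<bar> \<le> \<bar>h\<bar> \<Longrightarrow> \<bar>u1 s - u1 a\<bar> \<le> e"
  shows "\<bar>u (a + h) - u a - h * u1 a\<bar> \<le> \<bar>h\<bar> * e"
proof (cases h "0::real" rule: linorder_cases)
  case less
  obtain z where z: "a + h < z" "z < a" "u a - u (a + h) = (a - (a + h)) * u1 z"
    using MVT2[of "a + h" a u u1] d less by auto
  have "\<bar>u1 z - u1 a\<bar> \<le> e" using b[of z] z less by auto
  moreover have "u (a + h) - u a - h * u1 a = h * (u1 z - u1 a)" using z(3) by (simp add: algebra_simps)
  ultimately show ?thesis by (simp add: abs_mult mult_left_mono)
next
  case equal then show ?thesis by simp
next
  case greater
  obtain z where z: "a < z" "z < a + h" "u (a + h) - u a = ((a + h) - a) * u1 z"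
    using MVT2[of a "a + h" u u1] d greater by auto
  have "\<bar>u1 z - u1 a\<bar> \<le> e" using b[of z] z greater by auto
  moreover have "u (a + h) - u a - h * u1 a = h * (u1 z - u1 a)" using z(3) by (simp add: algebra_simps)
  ultimately show ?thesis by (simp add: abs_mult mult_left_mono)
qed

lemma conv_has_derivative:
  assumes L: "L > 0" and pW: "periodic L W" and iW: "set_integrable lebesgue (Omega L) W"
    and du: "\<And>s. (u has_real_derivative u1 s) (at s)"
    and cu1: "continuous_on UNIV u1" and pu: "periodic L u" and pu1: "periodic L u1"
  shows "(conv L W u has_real_derivative (LINT z:Omega L|lebesgue. W z * u1 (x - z))) (at x)"
proof -
  have cu: "continuous_on UNIV u"
    using du by (meson DERIV_isCont continuous_at_imp_continuous_on)
  define A where "A = (LINT z:Omega L|lebesgue. \<bar>W z\<bar>)"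
  have iA: "set_integrable lebesgue (Omega L) (\<lambda>z. \<bar>W z\<bar>)" using iW by (rule set_integrable_abs)
  have A0: "A \<ge> 0" unfolding A_def set_lebesgue_integral_def by (rule Bochner_Integration.integral_nonneg) (auto simp: indicator_def)
  define V1 where "V1 = (LINT z:Omega L|lebesgue. W z * u1 (x - z))"
  have iV1: "set_integrable lebesgue (Omega L) (\<lambda>z. W z * u1 (x - z))"
    using conv_alt(1)[OF L pW iW cu1 pu1] .
  show ?thesis
    unfolding DERIV_def LIM_eq V1_def[symmetric]
  proof (intro allI impI)
    fix r :: real assume r: "r > 0"
    define e where "e = r / (2 * (A + 1))"
    have e: "e > 0" using r A0 by (simp add: e_def)
    define K where "K = {x - 1 - L/2 .. x + 1 + L/2}"
    have "uniformly_continuous_on K u1"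
      by (rule compact_uniformly_continuous) (auto simp: K_def intro: continuous_on_subset[OF cu1])
    then obtain d where d: "d > 0" and dd: "\<And>s t. s \<in> K \<Longrightarrow> t \<in> K \<Longrightarrow> dist t s < d \<Longrightarrow> dist (u1 t) (u1 s) < e"
      unfolding uniformly_continuous_on_def using e by metis
    show "\<exists>s>0. \<forall>h. h \<noteq> 0 \<and> norm (h - 0) < s \<longrightarrow> norm ((conv L W u (x + h) - conv L W u x) / h - V1) < r"
    proof (intro exI[of _ "min d 1"] conjI allI impI)
      show "min d 1 > 0" using d by simp
      fix h :: real assume h: "h \<noteq> 0 \<and> norm (h - 0) < min d 1"
      have bnd: "\<bar>u (x - z + h) - u (x - z) - h * u1 (x - z)\<bar> \<le> \<bar>h\<bar> * e" if z: "z \<in> Omega L" for z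
      proof (rule mvt_bound[OF du])
        fix s assume s: "\<bar>s - (x - z)\<bar> \<le> \<bar>h\<bar>"
        have "x - z \<in> K" "s \<in> K" using z s h by (auto simp: K_def Omega_def abs_le_iff)
        moreover have "dist s (x - z) < d" using s h by (simp add: dist_real_def)
        ultimately have "dist (u1 s) (u1 (x - z)) < e" by (rule dd)
        then show "\<bar>u1 s - u1 (x - z)\<bar> \<le> e" by (simp add: dist_real_def)
      qed
      have i1: "set_integrable lebesgue (Omega L) (\<lambda>z. W z * u (x + h - z))"
        using conv_alt(1)[OF L pW iW cu pu] .
      have i0: "set_integrable lebesgue (Omega L) (\<lambda>z. W z * u (x - z))"
        using conv_alt(1)[OF L pW iW cu pu] .
      have "conv L W u (x + h) - conv L W u x - h * V1 =
            (LINT z:Omega L|lebesgue. W z * u (x + h - z)) - (LINT z:Omega L|lebesgue. W z * u (x - z))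
             - h * (LINT z:Omega L|lebesgue. W z * u1 (x - z))"
        using conv_alt(2)[OF L pW iW cu pu] V1_def by simp
      also have "\<dots> = (LINT z:Omega L|lebesgue. W z * (u (x - z + h) - u (x - z) - h * u1 (x - z)))"
        using set_integral_diff(2)[OF i1 i0] set_integral_diff(2)[OF set_integral_diff(1)[OF i1 i0] set_integrable_mult_right[OF iV1, of h]]
      proof -
        have pt: "W z * (u (x - z + h) - u (x - z) - h * u1 (x - z)) = (W z * u (x + h - z) - W z * u (x - z)) - h * (W z * u1 (x - z))" for z
          by (simp add: algebra_simps)
        have "(LINT z:Omega L|lebesgue. W z * (u (x - z + h) - u (x - z) - h * u1 (x - z)))
           = (LINT z:Omega L|lebesgue. (W z * u (x + h - z) - W z * u (x - z)) - h * (W z * u1 (x - z)))"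
          unfolding pt ..
        also have "\<dots> = (LINT z:Omega L|lebesgue. (W z * u (x + h - z) - W z * u (x - z))) - (LINT z:Omega L|lebesgue. h * (W z * u1 (x - z)))"
          by (rule set_integral_diff(2)[OF set_integral_diff(1)[OF i1 i0] set_integrable_mult_right[OF iV1, of h]])
        also have "\<dots> = (LINT z:Omega L|lebesgue. W z * u (x + h - z)) - (LINT z:Omega L|lebesgue. W z * u (x - z)) - h * (LINT z:Omega L|lebesgue. W z * u1 (x - z))"
          by (simp only: set_integral_diff(2)[OF i1 i0] set_integral_mult_right)
        finally show ?thesis by simp
      qed
      finally have eq: "conv L W u (x + h) - conv L W u x - h * V1 = (LINT z:Omega L|lebesgue. W z * (u (x - z + h) - u (x - z) - h * u1 (x - z)))" .
      have iD: "set_integrable lebesgue (Omega L) (\<lambda>z. W z * (u (x - z + h) - u (x - z) - h * u1 (x - z)))"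
        using set_integral_diff(1)[OF set_integral_diff(1)[OF i1 i0] set_integrable_mult_right[OF iV1, of h]]
        by (simp add: algebra_simps)
      have "\<bar>conv L W u (x + h) - conv L W u x - h * V1\<bar> \<le> (LINT z:Omega L|lebesgue. norm (W z * (u (x - z + h) - u (x - z) - h * u1 (x - z))))"
        unfolding eq using set_integral_norm_bound[OF iD] by simp
      also have "\<dots> \<le> (LINT z:Omega L|lebesgue. \<bar>W z\<bar> * (\<bar>h\<bar> * e))"
      proof (rule set_integral_mono)
        show "set_integrable lebesgue (Omega L) (\<lambda>z. norm (W z * (u (x - z + h) - u (x - z) - h * u1 (x - z))))"
          using set_integrable_abs[OF iD] by simp
        show "set_integrable lebesgue (Omega L) (\<lambda>z. \<bar>W z\<bar> * (\<bar>h\<bar> * e))"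
          using iA by auto
        fix z assume "z \<in> Omega L"
        then show "norm (W z * (u (x - z + h) - u (x - z) - h * u1 (x - z))) \<le> \<bar>W z\<bar> * (\<bar>h\<bar> * e)"
          using bnd by (simp add: abs_mult mult_left_mono)
      qed
      also have "\<dots> = A * (\<bar>h\<bar> * e)" unfolding A_def by simp
      finally have "\<bar>conv L W u (x + h) - conv L W u x - h * V1\<bar> \<le> A * (\<bar>h\<bar> * e)" .
      then have "\<bar>(conv L W u (x + h) - conv L W u x) / h - V1\<bar> \<le> A * e"
      proof -
        have "(conv L W u (x + h) - conv L W u x) / h - V1 = (conv L W u (x + h) - conv L W u x - h * V1) / h"
          using h by (simp add: diff_divide_distrib)
        then have "\<bar>(conv L W u (x + h) - conv L W u x) / h - V1\<bar> = \<bar>conv L W u (x + h) - conv L W u x - h * V1\<bar> / \<bar>h\<bar>"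
          by (simp add: abs_divide)
        also have "\<dots> \<le> A * (\<bar>h\<bar> * e) / \<bar>h\<bar>"
          by (rule divide_right_mono[OF \<open>\<bar>conv L W u (x + h) - conv L W u x - h * V1\<bar> \<le> A * (\<bar>h\<bar> * e)\<close>]) simp
        also have "\<dots> = A * e" using h by simp
        finally show ?thesis .
      qed
      also have "A * e < r"
      proof -
        have "A * e = (A / (A + 1)) * (r / 2)" unfolding e_def using A0 by (simp add: field_simps)
        also have "\<dots> < 1 * r" using A0 r by (intro mult_strict_mono) auto
        finally show ?thesis by simp
      qed
      finally show "norm ((conv L W u (x + h) - conv L W u x) / h - V1) < r" by simp
    qed
  qed
qed

lemma flux_argument:
  fixes u u1 V V1 :: "real \<Rightarrow> real"
  assumes L: "L > 0"
    and du: "\<And>s. (u has_real_derivative u1 s) (at s)" and pu: "periodic L u"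
    and upos: "\<forall>x\<in>Omega L. u x > 0"
    and dV: "\<And>s. (V has_real_derivative V1 s) (at s)" and pV: "periodic L V"
    and hyp: "\<forall>x\<in>Omega L. ((\<lambda>y. u1 y + u y * V1 y) has_real_derivative 0) (at x)"
  shows "\<forall>x\<in>{-L/2..L/2}. ln (u x) + V x = ln (u (-L/2)) + V (-L/2)"
proof -
  define J where "J y = u1 y + u y * V1 y" for y
  define c where "c = J 0"
  have Jc: "J x = c" if "x \<in> {-L/2<..<L/2}" for x
    unfolding c_def
    by (rule DERIV_isconst3[of "-L/2" "L/2"]) (use that L hyp in \<open>auto simp: J_def Omega_def\<close>)
  have cu: "continuous_on UNIV u" using du by (meson DERIV_isCont continuous_at_imp_continuous_on)
  have cV: "continuous_on UNIV V" using dV by (meson DERIV_isCont continuous_at_imp_continuous_on)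
  have uL: "u (-L/2) = u (L/2)"
  proof -
    have "u (-L/2 + L) = u (-L/2)" using pu unfolding periodic_def by blast
    moreover have "-L/2 + L = L/2" by simp
    ultimately show ?thesis by simp
  qed
  have VL: "V (-L/2) = V (L/2)"
  proof -
    have "V (-L/2 + L) = V (-L/2)" using pV unfolding periodic_def by blast
    moreover have "-L/2 + L = L/2" by simp
    ultimately show ?thesis by simp
  qed
  have upos': "u x > 0" if "x \<in> {-L/2..L/2}" for x
  proof (cases "x = -L/2")
    case True
    have "L/2 \<in> Omega L" using L by (simp add: Omega_def)
    then have "u (L/2) > 0" using upos by blast
    then show ?thesis using True uL by simp
  next
    case False then show ?thesis using upos that by (auto simp: Omega_def)
  qed
  define F where "F x = ln (u x) + V x" for x
  have dF: "(F has_real_derivative (u1 x / u x + V1 x)) (at x)" if "x \<in> {-L/2..L/2}" for x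
    unfolding F_def using upos'[OF that]
    by (auto intro!: derivative_eq_intros du dV simp: field_simps)
  have dFc: "(F has_real_derivative (c / u x)) (at x)" if "x \<in> {-L/2<..<L/2}" for x
  proof -
    have "u1 x / u x + V1 x = c / u x"
      using Jc[OF that] upos'[of x] that unfolding J_def by (auto simp: field_simps)
    then show ?thesis using dF[of x] that by auto
  qed
  have cF: "continuous_on {-L/2..L/2} F"
    using dF by (meson DERIV_isCont continuous_at_imp_continuous_on)
  have FL: "F (L/2) = F (-L/2)" unfolding F_def using uL VL by simp
  have "((\<lambda>x. c / u x) has_integral F (L/2) - F (-L/2)) {-L/2..L/2}"
    by (rule fundamental_theorem_of_calculus_interior) (use L cF dFc in \<open>auto simp: has_real_derivative_iff_has_vector_derivative[symmetric]\<close>)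
  then have int0: "((\<lambda>x. c / u x) has_integral 0) {-L/2..L/2}" using FL by simp
  have c0: "c = 0"
  proof (rule ccontr)
    assume "c \<noteq> 0"
    have "((\<lambda>x. (1/c) * (c / u x)) has_integral (1/c) * 0) {-L/2..L/2}"
      by (rule has_integral_mult_right[OF int0])
    then have i1: "((\<lambda>x. 1 / u x) has_integral 0) {-L/2..L/2}" using \<open>c \<noteq> 0\<close> by simp
    have "compact (u ` {-L/2..L/2})" by (rule compact_continuous_image) (auto intro: continuous_on_subset[OF cu])
    then obtain M where "\<forall>v\<in>u ` {-L/2..L/2}. norm v \<le> M"
      using compact_imp_bounded bounded_iff by blast
    then have M: "\<forall>v\<in>u ` {-L/2..L/2}. v \<le> M" by (auto simp: abs_le_iff)
    have z: "(0::real) \<in> {-L/2..L/2}" using L by auto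
    have M0: "M > 0" using M upos'[OF z] z by (meson image_eqI less_le_trans)
    have "Henstock_Kurzweil_Integration.content {-L/2..L/2} *\<^sub>R (1/M) \<le> 0"
    proof (rule has_integral_le[OF has_integral_const_real i1])
      fix x assume x: "x \<in> {-L/2..L/2}"
      show "1 / M \<le> 1 / u x" using M x upos'[OF x] M0 by (intro divide_left_mono) auto
    qed
    moreover have "Henstock_Kurzweil_Integration.content {-L/2..L/2} *\<^sub>R (1/M) > 0" using L M0 by simp
    ultimately show False by simp
  qed
  have "F x = F (-L/2)" if "x \<in> {-L/2..L/2}" for x
  proof (rule DERIV_isconst2[of "-L/2" "L/2"])
    show "- L / 2 < L / 2" using L by simp
    show "continuous_on {- L / 2..L / 2} F" by (rule cF)
    show "- L / 2 \<le> x" "x \<le> L / 2" using that by auto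
    fix y assume "- L / 2 < y" "y < L / 2"
    then have "(F has_real_derivative (c / u y)) (at y)" by (intro dFc) auto
    then show "(F has_real_derivative 0) (at y)" using c0 by simp
  qed
  then show ?thesis unfolding F_def by blast
qed

definition E :: "real \<Rightarrow> int \<Rightarrow> real \<Rightarrow> complex" where
  "E L k x = exp (- (2 * pi * \<i> * of_int k * of_real x / of_real L))"

lemma fourier_coeff_E: "fourier_coeff L f k = (LINT x:Omega L|lebesgue. complex_of_real (f x) * E L k x)"
  by (simp add: fourier_coeff_def E_def)

lemma E_add: "E L k (a + b) = E L k a * E L k b"
  unfolding E_def by (simp add: exp_add[symmetric] algebra_simps add_divide_distrib)

lemma E_diff: "E L k x = E L k z * E L k (x - z)"
  using E_add[of L k z "x - z"] by simp

lemma E_norm [simp]: "norm (E L k x) = 1"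
  unfolding E_def by (simp add: norm_exp_eq_Re)

lemma E_periodic:
  assumes "L > 0" shows "periodic L (E L k)"
  unfolding periodic_def
proof
  fix x
  have "E L k L = 1"
  proof -
    have "E L k L = exp (complex_of_real (2 * of_int (-k) * pi) * \<i>)"
      unfolding E_def using assms by (simp add: field_simps)
    also have "\<dots> = 1" by (rule exp_integer_2pi) simp
    finally show ?thesis .
  qed
  then show "E L k (x + L) = E L k x" by (simp add: E_add)
qed

lemma E_cont: "L > 0 \<Longrightarrow> continuous_on UNIV (E L k)"
  unfolding E_def by (intro continuous_intros) auto

lemma cont_integrable_Ioc:
  fixes f :: "real \<Rightarrow> 'a::euclidean_space"
  assumes "continuous_on UNIV f"
  shows "set_integrable lebesgue {a<..b} f"
proof -
  have "f absolutely_integrable_on {a..b}"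
    by (rule absolutely_integrable_continuous_real) (rule continuous_on_subset[OF assms], simp)
  then show ?thesis by (rule set_integrable_subset) auto
qed

lemma periodic_shift_integral:
  fixes \<psi> :: "real \<Rightarrow> 'a::euclidean_space"
  assumes L: "L > 0" and p: "periodic L \<psi>" and c: "continuous_on UNIV \<psi>"
  shows "set_integrable lebesgue (Omega L) (\<lambda>x. \<psi> (x - z))"
    and "(LINT x:Omega L|lebesgue. \<psi> (x - z)) = (LINT x:Omega L|lebesgue. \<psi> x)"
proof -
  have i: "set_integrable lebesgue {-L/2 - z<..-L/2 - z + L} \<psi>" by (rule cont_integrable_Ioc[OF c])
  have e: "{-L/2 - z - (-z)<..-L/2 - z + L - (-z)} = Omega L" by (simp add: Omega_def)
  show "set_integrable lebesgue (Omega L) (\<lambda>x. \<psi> (x - z))"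
    using set_integrable_shift(1)[OF i, of "-z"] unfolding e by simp
  have "(LINT x:Omega L|lebesgue. \<psi> (x - z)) = (LINT x:{-L/2 - z<..-L/2 - z + L}|lebesgue. \<psi> x)"
    using set_integrable_shift(2)[OF i, of "-z"] unfolding e by simp
  also have "\<dots> = (LINT x:Omega L|lebesgue. \<psi> x)"
    using periodic_shift_Omega[OF p L cont_integrable_Ioc[OF c, of "-L/2" "L/2", folded Omega_def], of "-L/2 - z"] by simp
  finally show "(LINT x:Omega L|lebesgue. \<psi> (x - z)) = (LINT x:Omega L|lebesgue. \<psi> x)" .
qed

lemma fourier_conv:
  assumes L: "L > 0" and pW: "periodic L W" and iW: "set_integrable lebesgue (Omega L) W"
    and cg: "continuous_on UNIV g" and pg: "periodic L g"
  shows "fourier_coeff L (conv L W g) k = fourier_coeff L W k * fourier_coeff L g k"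
proof -
  define W' where "W' z = indicator (Omega L) z * W z" for z
  define \<psi> where "\<psi> y = complex_of_real (g y) * E L k y" for y
  have cE: "continuous_on UNIV (E L k)" using E_cont[OF L] .
  have c\<psi>: "continuous_on UNIV \<psi>" unfolding \<psi>_def by (intro continuous_intros cg cE)
  have p\<psi>: "periodic L \<psi>" using pg E_periodic[OF L, of k] by (simp add: periodic_def \<psi>_def)
  have iW': "integrable lebesgue W'" using iW unfolding set_integrable_def W'_def by simp
  have mW': "W' \<in> borel_measurable lebesgue" using iW' by (rule borel_measurable_integrable)
  define F where "F z x = complex_of_real (W' z) * (indicator (Omega L) x *\<^sub>R (E L k z * \<psi> (x - z)))" for z x
  have idm: "(\<lambda>x::real. x) \<in> borel_measurable lebesgue" by (rule cont_meas) (rule continuous_on_id)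
  have m1: "(\<lambda>p::real\<times>real. snd p - fst p) \<in> borel_measurable (lebesgue \<Otimes>\<^sub>M lebesgue)"
  proof -
    have s: "snd \<in> borel_measurable (lebesgue \<Otimes>\<^sub>M (lebesgue :: real measure))"
      using measurable_compose[OF measurable_snd idm] by (simp add: o_def)
    have f: "fst \<in> borel_measurable ((lebesgue :: real measure) \<Otimes>\<^sub>M lebesgue)"
      using measurable_compose[OF measurable_fst idm] by (simp add: o_def)
    show ?thesis using borel_measurable_diff[OF s f] by simp
  qed
  have m2: "(\<lambda>p. \<psi> (snd p - fst p)) \<in> borel_measurable (lebesgue \<Otimes>\<^sub>M lebesgue)"
    by (rule measurable_compose[OF m1 borel_measurable_continuous_onI[OF c\<psi>]])
  have m3: "(\<lambda>p. E L k (fst p)) \<in> borel_measurable (lebesgue \<Otimes>\<^sub>M lebesgue)"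
    by (rule measurable_compose[OF measurable_fst cont_meas[OF cE]])
  have m4: "(\<lambda>p. W' (fst p)) \<in> borel_measurable (lebesgue \<Otimes>\<^sub>M lebesgue)"
    by (rule measurable_compose[OF measurable_fst mW'])
  have m5: "(\<lambda>p. indicator (Omega L) (snd p) :: real) \<in> borel_measurable (lebesgue \<Otimes>\<^sub>M lebesgue)"
    by (rule measurable_compose[OF measurable_snd]) simp
  have mF: "(\<lambda>p. F (fst p) (snd p)) \<in> borel_measurable (lebesgue \<Otimes>\<^sub>M lebesgue)"
    unfolding F_def using m2 m3 m4 m5 by measurable
  define C where "C = (LINT x:Omega L|lebesgue. norm (\<psi> x))"
  have cn\<psi>: "continuous_on UNIV (\<lambda>x. norm (\<psi> x))" by (intro continuous_intros c\<psi>)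
  have pn\<psi>: "periodic L (\<lambda>x. norm (\<psi> x))" using p\<psi> by (simp add: periodic_def)
  have nF: "(LINT x|lebesgue. norm (F z x)) = \<bar>W' z\<bar> * C" for z
  proof -
    have "(LINT x|lebesgue. norm (F z x)) = (LINT x|lebesgue. \<bar>W' z\<bar> * (indicator (Omega L) x *\<^sub>R norm (\<psi> (x - z))))"
      unfolding F_def by (rule Bochner_Integration.integral_cong) (auto simp: norm_mult split: split_indicator)
    also have "\<dots> = \<bar>W' z\<bar> * (LINT x:Omega L|lebesgue. norm (\<psi> (x - z)))"
      unfolding set_lebesgue_integral_def by simp
    also have "\<dots> = \<bar>W' z\<bar> * C"
      unfolding C_def using periodic_shift_integral(2)[OF L pn\<psi> cn\<psi>, of z] by simp
    finally show ?thesis .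
  qed
  have intF: "integrable (lebesgue \<Otimes>\<^sub>M lebesgue) (\<lambda>(z, x). F z x)"
  proof (rule pair_sigma_finite.Fubini_integrable[OF pair_sigma_finite_lebesgue])
    show "(\<lambda>(z, x). F z x) \<in> borel_measurable (lebesgue \<Otimes>\<^sub>M lebesgue)" using mF by (simp add: case_prod_beta')
    show "integrable lebesgue (\<lambda>z. LINT x|lebesgue. norm ((\<lambda>(z, x). F z x) (z, x)))"
      using iW' by (simp add: nF)
    show "AE z in lebesgue. integrable lebesgue (\<lambda>x. (\<lambda>(z, x). F z x) (z, x))"
    proof (rule always_eventually, rule allI)
      fix z
      have "set_integrable lebesgue (Omega L) (\<lambda>x. E L k z * \<psi> (x - z))"
        using periodic_shift_integral(1)[OF L p\<psi> c\<psi>, of z] by simp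
      then have "integrable lebesgue (\<lambda>x. indicator (Omega L) x *\<^sub>R (E L k z * \<psi> (x - z)))"
        unfolding set_integrable_def .
      from integrable_mult_right[OF this, of "complex_of_real (W' z)"]
      show "integrable lebesgue (\<lambda>x. (\<lambda>(z, x). F z x) (z, x))"
        by (simp add: F_def)
    qed
  qed
  have fub: "(LINT x|lebesgue. LINT z|lebesgue. F z x) = (LINT z|lebesgue. LINT x|lebesgue. F z x)"
    by (rule pair_sigma_finite.Fubini_integral[OF pair_sigma_finite_lebesgue intF])
  have lhs: "(LINT z|lebesgue. F z x) = indicator (Omega L) x *\<^sub>R (complex_of_real (conv L W g x) * E L k x)" for x
  proof -
    have "(LINT z|lebesgue. F z x) = (LINT z|lebesgue. indicator (Omega L) x *\<^sub>R (complex_of_real (indicator (Omega L) z *\<^sub>R (W z * g (x - z))) * E L k x))"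
    proof (rule Bochner_Integration.integral_cong)
      fix z
      show "F z x = indicator (Omega L) x *\<^sub>R (complex_of_real (indicator (Omega L) z *\<^sub>R (W z * g (x - z))) * E L k x)"
        unfolding F_def W'_def \<psi>_def using E_diff[of L k x z]
        by (auto split: split_indicator simp: algebra_simps)
    qed simp
    also have "\<dots> = indicator (Omega L) x *\<^sub>R (complex_of_real (LINT z|lebesgue. indicator (Omega L) z *\<^sub>R (W z * g (x - z))) * E L k x)"
      by (simp only: integral_scaleR_right integral_mult_left_zero integral_complex_of_real)
    also have "\<dots> = indicator (Omega L) x *\<^sub>R (complex_of_real (conv L W g x) * E L k x)"
      using conv_alt(2)[OF L pW iW cg pg, of x] unfolding set_lebesgue_integral_def by simp
    finally show ?thesis .
  qed
  have rhs: "(LINT x|lebesgue. F z x) = indicator (Omega L) z *\<^sub>R (complex_of_real (W z) * E L k z) * fourier_coeff L g k" for z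
  proof -
    have "(LINT x|lebesgue. F z x) = complex_of_real (W' z) * E L k z * (LINT x:Omega L|lebesgue. \<psi> (x - z))"
    proof -
      have "(\<lambda>x. F z x) = (\<lambda>x. (complex_of_real (W' z) * E L k z) * (indicator (Omega L) x *\<^sub>R \<psi> (x - z)))"
        by (auto simp: F_def fun_eq_iff split: split_indicator)
      then show ?thesis unfolding set_lebesgue_integral_def by (simp only: integral_mult_right_zero)
    qed
    also have "\<dots> = complex_of_real (W' z) * E L k z * fourier_coeff L g k"
      using periodic_shift_integral(2)[OF L p\<psi> c\<psi>, of z] unfolding fourier_coeff_E \<psi>_def by simp
    also have "\<dots> = indicator (Omega L) z *\<^sub>R (complex_of_real (W z) * E L k z) * fourier_coeff L g k"
      unfolding W'_def by (auto split: split_indicator)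
    finally show ?thesis .
  qed
  have "fourier_coeff L (conv L W g) k = (LINT x|lebesgue. LINT z|lebesgue. F z x)"
    unfolding fourier_coeff_E set_lebesgue_integral_def lhs ..
  also have "\<dots> = (LINT z|lebesgue. LINT x|lebesgue. F z x)" by (rule fub)
  also have "\<dots> = (LINT z|lebesgue. indicator (Omega L) z *\<^sub>R (complex_of_real (W z) * E L k z)) * fourier_coeff L g k"
    unfolding rhs by (simp only: integral_mult_left_zero)
  also have "\<dots> = fourier_coeff L W k * fourier_coeff L g k"
    unfolding fourier_coeff_E set_lebesgue_integral_def ..
  finally show ?thesis .
qed

inductive tp :: "real \<Rightarrow> (real \<Rightarrow> complex) \<Rightarrow> bool" for L where
  tp_E: "tp L (E L m)"
| tp_add: "tp L f \<Longrightarrow> tp L g \<Longrightarrow> tp L (\<lambda>x. f x + g x)"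
| tp_scale: "tp L f \<Longrightarrow> tp L (\<lambda>x. c * f x)"

lemma E_mult: "E L a x * E L b x = E L (a + b) x"
  unfolding E_def by (simp add: exp_add[symmetric] algebra_simps add_divide_distrib)

lemma E_zero [simp]: "E L 0 x = 1"
  unfolding E_def by simp

lemma tp_const: "tp L (\<lambda>x. c)"
  using tp_scale[OF tp_E[of L 0], of c] by simp

lemma tp_mult_E: "tp L f \<Longrightarrow> tp L (\<lambda>x. E L m x * f x)"
proof (induction rule: tp.induct)
  case (tp_E k)
  then show ?case using tp.tp_E[of L "m + k"] by (simp add: E_mult)
next
  case (tp_add f g)
  then show ?case using tp.tp_add[OF tp_add.IH] by (simp add: distrib_left)
next
  case (tp_scale f c)
  then show ?case using tp.tp_scale[OF tp_scale.IH, of c] by (simp add: mult.left_commute)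
qed

lemma tp_mult: "tp L f \<Longrightarrow> tp L g \<Longrightarrow> tp L (\<lambda>x. f x * g x)"
proof (induction rule: tp.induct)
  case (tp_E k)
  then show ?case using tp_mult_E by blast
next
  case (tp_add f1 f2)
  then show ?case using tp.tp_add[OF tp_add.IH] by (simp add: distrib_right)
next
  case (tp_scale f c)
  then show ?case using tp.tp_scale[OF tp_scale.IH, of c] by (simp add: mult.assoc)
qed

lemma tp_cont: assumes "tp L f" "L > 0" shows "continuous_on UNIV f"
  using assms by (induction rule: tp.induct) (auto intro!: continuous_intros E_cont)

lemma tp_diff: "tp L f \<Longrightarrow> tp L g \<Longrightarrow> tp L (\<lambda>x. f x - g x)"
  using tp_add[of L f "\<lambda>x. (-1) * g x"] tp_scale[of L g "-1"] by simp

lemma tp_bounded: "tp L f \<Longrightarrow> \<exists>B. \<forall>x. norm (f x) \<le> B"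
proof (induction rule: tp.induct)
  case (tp_E m)
  then show ?case by (intro exI[of _ 1]) simp
next
  case (tp_add f g)
  then obtain B1 B2 where "\<forall>x. norm (f x) \<le> B1" "\<forall>x. norm (g x) \<le> B2" by blast
  then show ?case by (intro exI[of _ "B1 + B2"]) (auto intro: norm_triangle_le add_mono)
next
  case (tp_scale f c)
  then obtain B where "\<forall>x. norm (f x) \<le> B" by blast
  then show ?case by (intro exI[of _ "norm c * B"]) (auto simp: norm_mult intro: mult_left_mono)
qed

lemma tp_integral_zero:
  assumes L: "L > 0" and iD: "set_integrable lebesgue (Omega L) D"
    and F0: "\<And>m. fourier_coeff L D m = 0"
    and f: "tp L f"
  shows "set_integrable lebesgue (Omega L) (\<lambda>x. complex_of_real (D x) * f x)
        \<and> (LINT x:Omega L|lebesgue. complex_of_real (D x) * f x) = 0"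
  using f
proof (induction rule: tp.induct)
  case (tp_E m)
  have "set_integrable lebesgue (Omega L) (\<lambda>x. D x *\<^sub>R E L m x)"
    by (rule set_integrable_scaleR_bounded[OF iD cont_meas[OF E_cont[OF L]], where B=1]) simp
  then show ?case using F0[of m] by (simp add: fourier_coeff_E scaleR_conv_of_real)
next
  case (tp_add f g)
  then show ?case by (simp add: distrib_left set_integral_add)
next
  case (tp_scale f c)
  then show ?case by (simp add: mult.left_commute[of _ c])
qed

lemma cis_E: "L > 0 \<Longrightarrow> cis (2 * pi / L * x) = E L (-1) x"
  unfolding E_def cis_conv_exp by (simp add: field_simps)

lemma tp_poly:
  assumes L: "L > 0" and g: "real_polynomial_function g"
  shows "tp L (\<lambda>x. complex_of_real (g (cis (2 * pi / L * x))))"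
  using g
proof (induction rule: real_polynomial_function.induct)
  case (linear g)
  then have lg: "linear g" by (rule bounded_linear.linear)
  have dec: "g z = Re z * g 1 + Im z * g \<i>" for z
  proof -
    have "z = Re z *\<^sub>R 1 + Im z *\<^sub>R \<i>" by (simp add: complex_eq_iff)
    then have "g z = g (Re z *\<^sub>R 1 + Im z *\<^sub>R \<i>)" by simp
    also have "\<dots> = Re z * g 1 + Im z * g \<i>" using lg by (simp add: linear_add linear_scale)
    finally show ?thesis .
  qed
  define th where "th x = 2 * pi / L * x" for x
  have Em: "E L (-1) x = exp (\<i> * complex_of_real (th x))" for x
    unfolding E_def th_def by (simp add: mult.commute mult.left_commute)
  have Ep: "E L 1 x = exp (- (\<i> * complex_of_real (th x)))" for x
    unfolding E_def th_def by (simp add: mult.commute mult.left_commute)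
  have cosE: "complex_of_real (cos (th x)) = (E L (-1) x + E L 1 x) / 2" for x
    unfolding cos_of_real[symmetric] cos_exp_eq Em Ep ..
  have sinE: "complex_of_real (sin (th x)) = (E L (-1) x - E L 1 x) / (2 * \<i>)" for x
    unfolding sin_of_real[symmetric] sin_exp_eq Em Ep ..
  have eq: "complex_of_real (g (cis (2 * pi / L * x))) =
        (E L (-1) x + E L 1 x) * (complex_of_real (g 1) / 2) + (E L (-1) x - E L 1 x) * (complex_of_real (g \<i>) / (2 * \<i>))" for x
  proof -
    have "complex_of_real (g (cis (2 * pi / L * x))) = complex_of_real (cos (th x)) * complex_of_real (g 1) + complex_of_real (sin (th x)) * complex_of_real (g \<i>)"
      using dec[of "cis (2 * pi / L * x)"] unfolding th_def by simp
    also have "\<dots> = (E L (-1) x + E L 1 x) * (complex_of_real (g 1) / 2) + (E L (-1) x - E L 1 x) * (complex_of_real (g \<i>) / (2 * \<i>))"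
      unfolding cosE sinE by (simp only: times_divide_eq_left times_divide_eq_right)
    finally show ?thesis .
  qed
  have "tp L (\<lambda>x. (E L (-1) x + E L 1 x) * (complex_of_real (g 1) / 2) + (E L (-1) x - E L 1 x) * (complex_of_real (g \<i>) / (2 * \<i>)))"
    by (rule tp_add[OF tp_mult[OF tp_add[OF tp_E tp_E] tp_const] tp_mult[OF tp_diff[OF tp_E tp_E] tp_const]])
  then show ?case unfolding eq .
next
  case (const c)
  then show ?case by (rule tp_const)
next
  case (add f g)
  then show ?case using tp_add by simp
next
  case (mult f g)
  then show ?case using tp_mult by simp
qed

lemma sphere_comp_integrable:
  fixes H :: "complex \<Rightarrow> real"
  assumes L: "L > 0" and iD: "set_integrable lebesgue (Omega L) D"
    and H: "continuous_on (sphere 0 1) H"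
  shows "set_integrable lebesgue (Omega L) (\<lambda>x. D x * H (cis (2 * pi / L * x)))"
proof -
  have c1: "continuous_on UNIV (\<lambda>x::real. cis (2 * pi / L * x))" by (intro continuous_intros)
  have c: "continuous_on UNIV (\<lambda>x. H (cis (2 * pi / L * x)))"
    by (rule continuous_on_compose2[OF H c1]) auto
  have "compact (H ` sphere 0 1)" by (rule compact_continuous_image[OF H]) simp
  then obtain B where B: "\<forall>v\<in>H ` sphere 0 1. norm v \<le> B" using compact_imp_bounded bounded_iff by blast
  have nB: "norm (H (cis (2 * pi / L * x))) \<le> B" for x using B by auto
  show ?thesis using set_integrable_scaleR_bounded[OF iD cont_meas[OF c] nB] by simp
qed

lemma cont_sphere_integral_zero:
  fixes G :: "complex \<Rightarrow> real"
  assumes L: "L > 0" and iD: "set_integrable lebesgue (Omega L) D"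
    and F0: "\<And>m. fourier_coeff L D m = 0"
    and G: "continuous_on (sphere 0 1) G"
  shows "(LINT x:Omega L|lebesgue. D x * G (cis (2 * pi / L * x))) = 0"
proof (rule ccontr)
  define I where "I = (LINT x:Omega L|lebesgue. D x * G (cis (2 * pi / L * x)))"
  assume "I \<noteq> 0"
  define A where "A = (LINT x:Omega L|lebesgue. \<bar>D x\<bar>)"
  have iA: "set_integrable lebesgue (Omega L) (\<lambda>x. \<bar>D x\<bar>)" using iD by (rule set_integrable_abs)
  have A0: "A \<ge> 0" unfolding A_def set_lebesgue_integral_def
    by (rule Bochner_Integration.integral_nonneg) (auto simp: indicator_def)
  define e where "e = \<bar>I\<bar> / (2 * (A + 1))"
  have e: "e > 0" using \<open>I \<noteq> 0\<close> A0 by (simp add: e_def)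
  obtain g where g: "real_polynomial_function g" and ge: "\<And>z. z \<in> sphere 0 1 \<Longrightarrow> \<bar>G z - g z\<bar> < e"
    using Stone_Weierstrass_real_polynomial_function[OF compact_sphere G e] by blast
  have cg: "continuous_on (sphere 0 1) g"
    using g by (simp add: real_polynomial_function_eq continuous_on_polymonial_function)
  have iG: "set_integrable lebesgue (Omega L) (\<lambda>x. D x * G (cis (2 * pi / L * x)))"
    by (rule sphere_comp_integrable[OF L iD G])
  have ig: "set_integrable lebesgue (Omega L) (\<lambda>x. D x * g (cis (2 * pi / L * x)))"
    by (rule sphere_comp_integrable[OF L iD cg])
  have "(LINT x:Omega L|lebesgue. complex_of_real (D x) * complex_of_real (g (cis (2 * pi / L * x)))) = 0"
    using tp_integral_zero[OF L iD F0 tp_poly[OF L g]] by blast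
  then have "complex_of_real (LINT x:Omega L|lebesgue. D x * g (cis (2 * pi / L * x))) = 0"
    by (simp add: set_integral_complex_of_real[symmetric])
  then have g0: "(LINT x:Omega L|lebesgue. D x * g (cis (2 * pi / L * x))) = 0" by simp
  have "I = (LINT x:Omega L|lebesgue. D x * G (cis (2 * pi / L * x)) - D x * g (cis (2 * pi / L * x)))"
    unfolding I_def using set_integral_diff(2)[OF iG ig] g0 by simp
  also have "\<dots> = (LINT x:Omega L|lebesgue. D x * (G (cis (2 * pi / L * x)) - g (cis (2 * pi / L * x))))"
    by (simp add: right_diff_distrib)
  finally have I2: "I = (LINT x:Omega L|lebesgue. D x * (G (cis (2 * pi / L * x)) - g (cis (2 * pi / L * x))))" .
  have iDiff: "set_integrable lebesgue (Omega L) (\<lambda>x. D x * (G (cis (2 * pi / L * x)) - g (cis (2 * pi / L * x))))"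
    using set_integral_diff(1)[OF iG ig] by (simp add: right_diff_distrib)
  have "\<bar>I\<bar> \<le> (LINT x:Omega L|lebesgue. norm (D x * (G (cis (2 * pi / L * x)) - g (cis (2 * pi / L * x)))))"
    unfolding I2 using set_integral_norm_bound[OF iDiff] by simp
  also have "\<dots> \<le> (LINT x:Omega L|lebesgue. \<bar>D x\<bar> * e)"
  proof (rule set_integral_mono)
    show "set_integrable lebesgue (Omega L) (\<lambda>x. norm (D x * (G (cis (2 * pi / L * x)) - g (cis (2 * pi / L * x)))))"
      using set_integrable_abs[OF iDiff] by simp
    show "set_integrable lebesgue (Omega L) (\<lambda>x. \<bar>D x\<bar> * e)" using iA by auto
    fix x
    have "cis (2 * pi / L * x) \<in> sphere 0 1" by simp
    then have "\<bar>G (cis (2 * pi / L * x)) - g (cis (2 * pi / L * x))\<bar> \<le> e" using ge less_imp_le by blast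
    then show "norm (D x * (G (cis (2 * pi / L * x)) - g (cis (2 * pi / L * x)))) \<le> \<bar>D x\<bar> * e"
      by (simp add: abs_mult mult_left_mono)
  qed
  also have "\<dots> = A * e" unfolding A_def by simp
  also have "\<dots> < \<bar>I\<bar>"
  proof -
    have "A * e = (A / (A + 1)) * (\<bar>I\<bar> / 2)" unfolding e_def using A0 by (simp add: field_simps)
    also have "\<dots> < 1 * \<bar>I\<bar>" using A0 \<open>I \<noteq> 0\<close> by (intro mult_strict_mono) auto
    finally show ?thesis by simp
  qed
  finally show False by simp
qed

lemma cis_inj_Omega:
  assumes L: "L > 0" and x: "x \<in> Omega L" and y: "y \<in> Omega L"
    and eq: "cis (2 * pi / L * x) = cis (2 * pi / L * y)"
  shows "x = y"
proof -
  obtain n :: int where n: "\<i> * complex_of_real (2 * pi / L * x) = \<i> * complex_of_real (2 * pi / L * y) + complex_of_real (real_of_int (2 * n) * pi) * \<i>"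
    using eq unfolding cis_conv_exp exp_eq by blast
  then have "Im (\<i> * complex_of_real (2 * pi / L * x)) = Im (\<i> * complex_of_real (2 * pi / L * y) + complex_of_real (real_of_int (2 * n) * pi) * \<i>)"
    by simp
  then have "2 * pi / L * x = 2 * pi / L * y + 2 * real_of_int n * pi" by simp
  then have "2 * pi * x = 2 * pi * y + 2 * real_of_int n * pi * L" using L by (simp add: field_simps)
  then have "pi * (2 * (x - y - real_of_int n * L)) = 0" by (simp add: algebra_simps)
  then have "x - y = real_of_int n * L" by simp
  moreover have "\<bar>x - y\<bar> < L" using x y by (auto simp: Omega_def)
  ultimately have "\<bar>real_of_int n\<bar> * L < 1 * L" using L by (simp add: abs_mult)
  then have "\<bar>real_of_int n\<bar> < 1" using L by (simp only: mult_less_cancel_right)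
  then have "n = 0" by linarith
  then show ?thesis using \<open>x - y = real_of_int n * L\<close> by simp
qed

lemma interval_integral_zero:
  assumes L: "L > 0" and iD: "set_integrable lebesgue (Omega L) D"
    and F0: "\<And>m. fourier_coeff L D m = 0"
    and a: "-L/2 < a" "a \<le> L/2"
  shows "(LINT x:{a..L/2}|lebesgue. D x) = 0"
proof -
  define c where "c x = cis (2 * pi / L * x)" for x
  define A where "A = c ` {a..L/2}"
  have cc: "continuous_on UNIV c" unfolding c_def by (intro continuous_intros)
  have cA: "compact A" unfolding A_def by (rule compact_continuous_image) (auto intro: continuous_on_subset[OF cc])
  have clA: "closed A" using cA compact_imp_closed by blast
  have neA: "A \<noteq> {}" using a unfolding A_def by auto
  define G where "G n z = max 0 (1 - real n * infdist z A)" for n :: nat and z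
  have cG: "continuous_on UNIV (G n)" for n unfolding G_def by (intro continuous_intros)
  have cGc: "continuous_on UNIV (\<lambda>x. G n (c x))" for n
    by (rule continuous_on_compose2[OF cG cc]) auto
  have G01: "0 \<le> G n z \<and> G n z \<le> 1" for n z unfolding G_def using infdist_nonneg[of z A] by auto
  have int0: "(LINT x:Omega L|lebesgue. D x * G n (c x)) = 0" for n
    using cont_sphere_integral_zero[OF L iD F0 continuous_on_subset[OF cG subset_UNIV]] unfolding c_def by simp
  define D' where "D' x = indicator (Omega L) x * D x" for x
  have iD': "integrable lebesgue D'" using iD unfolding set_integrable_def D'_def by simp
  have mD': "D' \<in> borel_measurable lebesgue" using iD' by (rule borel_measurable_integrable)
  have sub: "{a..L/2} \<subseteq> Omega L" using a by (auto simp: Omega_def)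
  have lim: "(\<lambda>n. LINT x|lebesgue. D' x * G n (c x)) \<longlonglongrightarrow> (LINT x|lebesgue. indicator {a..L/2} x * D' x)"
  proof (rule integral_dominated_convergence[where w = "\<lambda>x. \<bar>D' x\<bar>"])
    show "(\<lambda>x. indicator {a..L/2} x * D' x) \<in> borel_measurable lebesgue"
      by (intro borel_measurable_times borel_measurable_indicator mD') simp
    show "(\<lambda>x. D' x * G n (c x)) \<in> borel_measurable lebesgue" for n
      by (intro borel_measurable_times mD' cont_meas[OF cGc])
    show "integrable lebesgue (\<lambda>x. \<bar>D' x\<bar>)" using iD' by simp
    show "AE x in lebesgue. norm (D' x * G n (c x)) \<le> \<bar>D' x\<bar>" for n
    proof (rule always_eventually, rule allI)
      fix x show "norm (D' x * G n (c x)) \<le> \<bar>D' x\<bar>"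
        using G01[of n "c x"] by (simp add: abs_mult mult_left_le)
    qed
    show "AE x in lebesgue. (\<lambda>n. D' x * G n (c x)) \<longlonglongrightarrow> indicator {a..L/2} x * D' x"
    proof (rule always_eventually, rule allI)
      fix x
      show "(\<lambda>n. D' x * G n (c x)) \<longlonglongrightarrow> indicator {a..L/2} x * D' x"
      proof (cases "x \<in> Omega L")
        case False
        then have "x \<notin> {a..L/2}" using sub by blast
        then show ?thesis using False by (simp add: D'_def)
      next
        case xO: True
        show ?thesis
        proof (cases "x \<in> {a..L/2}")
          case True
          then have "c x \<in> A" unfolding A_def by blast
          then have "infdist (c x) A = 0" by (rule infdist_zero)
          then have "G n (c x) = 1" for n unfolding G_def by simp
          then show ?thesis using True by simp
        next
          case False
          have "c x \<notin> A"
          proof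
            assume "c x \<in> A"
            then obtain y where y: "y \<in> {a..L/2}" "c x = c y" unfolding A_def by blast
            then have "x = y" using cis_inj_Omega[OF L xO, of y] sub unfolding c_def by blast
            then show False using y False by simp
          qed
          then have d: "infdist (c x) A > 0"
            using in_closed_iff_infdist_zero[OF clA neA, of "c x"] infdist_nonneg[of "c x" A] by linarith
          obtain N :: nat where N: "1 / infdist (c x) A \<le> real N" using real_arch_simple by blast
          have "G n (c x) = 0" if "n \<ge> N" for n
          proof -
            have "1 \<le> real N * infdist (c x) A" using N d by (simp add: divide_le_eq)
            also have "\<dots> \<le> real n * infdist (c x) A" using that d by (intro mult_right_mono) auto
            finally show ?thesis unfolding G_def by simp
          qed
          then have "eventually (\<lambda>n. D' x * G n (c x) = indicator {a..L/2} x * D' x) sequentially"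
            using False unfolding eventually_sequentially by auto
          then show ?thesis by (rule tendsto_eventually)
        qed
      qed
    qed
  qed
  have "(LINT x|lebesgue. D' x * G n (c x)) = 0" for n
  proof -
    have "(LINT x|lebesgue. D' x * G n (c x)) = (LINT x:Omega L|lebesgue. D x * G n (c x))"
      unfolding set_lebesgue_integral_def D'_def by (simp add: mult.assoc)
    then show ?thesis using int0 by simp
  qed
  then have "(\<lambda>n. 0::real) \<longlonglongrightarrow> (LINT x|lebesgue. indicator {a..L/2} x * D' x)"
    using lim by simp
  then have "(LINT x|lebesgue. indicator {a..L/2} x * D' x) = 0"
    by (simp add: LIMSEQ_const_iff)
  moreover have "(LINT x|lebesgue. indicator {a..L/2} x * D' x) = (LINT x:{a..L/2}|lebesgue. D x)"
    unfolding set_lebesgue_integral_def D'_def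
    by (rule Bochner_Integration.integral_cong) (use sub in \<open>auto split: split_indicator\<close>)
  ultimately show ?thesis by simp
qed

lemma integral_zero_iff_nn:
  fixes h :: "'a \<Rightarrow> real"
  assumes ih: "integrable M h"
  shows "integral\<^sup>L M h = 0 \<longleftrightarrow> (\<integral>\<^sup>+x. ennreal (h x) \<partial>M) = (\<integral>\<^sup>+x. ennreal (- h x) \<partial>M)"
proof -
  have fin: "(\<integral>\<^sup>+x. ennreal (norm (h x)) \<partial>M) < \<infinity>" using ih unfolding integrable_iff_bounded by blast
  have P: "(\<integral>\<^sup>+x. ennreal (h x) \<partial>M) < \<infinity>"
    by (rule le_less_trans[OF nn_integral_mono fin]) (simp add: ennreal_leI)
  have Q: "(\<integral>\<^sup>+x. ennreal (- h x) \<partial>M) < \<infinity>"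
    by (rule le_less_trans[OF nn_integral_mono fin]) (simp add: ennreal_leI)
  have eq: "integral\<^sup>L M h = enn2real (\<integral>\<^sup>+x. ennreal (h x) \<partial>M) - enn2real (\<integral>\<^sup>+x. ennreal (- h x) \<partial>M)"
    by (rule real_lebesgue_integral_def[OF ih])
  show ?thesis
  proof
    assume "integral\<^sup>L M h = 0"
    then have "enn2real (\<integral>\<^sup>+x. ennreal (h x) \<partial>M) = enn2real (\<integral>\<^sup>+x. ennreal (- h x) \<partial>M)" using eq by simp
    then have "ennreal (enn2real (\<integral>\<^sup>+x. ennreal (h x) \<partial>M)) = ennreal (enn2real (\<integral>\<^sup>+x. ennreal (- h x) \<partial>M))" by simp
    then show "(\<integral>\<^sup>+x. ennreal (h x) \<partial>M) = (\<integral>\<^sup>+x. ennreal (- h x) \<partial>M)"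
      unfolding ennreal_enn2real[OF P[unfolded infinity_ennreal_def]] ennreal_enn2real[OF Q[unfolded infinity_ennreal_def]] .
  next
    assume "(\<integral>\<^sup>+x. ennreal (h x) \<partial>M) = (\<integral>\<^sup>+x. ennreal (- h x) \<partial>M)"
    then show "integral\<^sup>L M h = 0" using eq by simp
  qed
qed

lemma AE_zero_from_intervals:
  fixes D :: "real \<Rightarrow> real"
  assumes L: "L > 0" and iD: "set_integrable lebesgue (Omega L) D"
    and I0: "(LINT x:Omega L|lebesgue. D x) = 0"
    and Ia: "\<And>a. -L/2 < a \<Longrightarrow> a \<le> L/2 \<Longrightarrow> (LINT x:{a..L/2}|lebesgue. D x) = 0"
  shows "AE x in lebesgue. x \<in> Omega L \<longrightarrow> D x = 0"
proof -
  define f where "f x = indicator (Omega L) x * D x" for x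
  have iif: "integrable lebesgue f" using iD unfolding set_integrable_def f_def by simp
  have mf: "f \<in> borel_measurable (completion lborel)" using borel_measurable_integrable[OF iif] by simp
  obtain g where mg: "g \<in> borel_measurable lborel" and fg: "AE x in lborel. f x = g x"
    using completion_ex_borel_measurable_real[OF mf] by blast
  have fgL: "AE x in lebesgue. f x = g x" using AE_completion[OF fg] .
  have mgL: "g \<in> borel_measurable lebesgue" using mg by (rule measurable_completion)
  have ig_leb: "integrable lebesgue g" using iif integrable_cong_AE[OF borel_measurable_integrable[OF iif] mgL fgL] by simp
  have ig: "integrable lborel g" using ig_leb integrable_completion[OF mg] by simp
  have intg: "(\<integral>x. indicator S x * g x \<partial>lborel) = (\<integral>x. indicator S x * f x \<partial>lebesgue)" if S: "S \<in> sets borel" for S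
  proof -
    have m: "(\<lambda>x. indicator S x * g x) \<in> borel_measurable lborel" using mg S by measurable
    have "(\<integral>x. indicator S x * g x \<partial>lborel) = (\<integral>x. indicator S x * g x \<partial>lebesgue)"
      by (rule integral_completion[OF m, symmetric])
    also have "\<dots> = (\<integral>x. indicator S x * f x \<partial>lebesgue)"
    proof (rule integral_cong_AE)
      show "(\<lambda>x. indicator S x * g x) \<in> borel_measurable lebesgue" using m by (rule measurable_completion)
      have SL: "S \<in> sets lebesgue" using S by (intro sets_completionI_sets) simp
      show "(\<lambda>x. indicator S x * f x) \<in> borel_measurable lebesgue"
        by (intro borel_measurable_times borel_measurable_indicator borel_measurable_integrable[OF iif] SL)
      show "AE x in lebesgue. indicator S x * g x = indicator S x * f x" using fgL by eventually_elim simp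
    qed
    finally show ?thesis .
  qed
  have half: "(\<integral>x. indicator {s<..} x * g x \<partial>lborel) = 0" for s
  proof -
    have "(\<integral>x. indicator {s<..} x * g x \<partial>lborel) = (\<integral>x. indicator {s<..} x * f x \<partial>lebesgue)"
      by (rule intg) simp
    also have "\<dots> = 0"
    proof (cases "s \<le> -L/2")
      case True
      have "(\<integral>x. indicator {s<..} x * f x \<partial>lebesgue) = (LINT x:Omega L|lebesgue. D x)"
        unfolding set_lebesgue_integral_def f_def
        by (rule Bochner_Integration.integral_cong) (use True in \<open>auto simp: Omega_def split: split_indicator\<close>)
      then show ?thesis using I0 by simp
    next
      case F1: False
      show ?thesis
      proof (cases "s \<ge> L/2")
        case True
        have "(\<integral>x. indicator {s<..} x * f x \<partial>lebesgue) = (\<integral>x. (0::real) \<partial>(lebesgue :: real measure))"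
          unfolding f_def
          by (rule Bochner_Integration.integral_cong) (use True in \<open>auto simp: Omega_def split: split_indicator\<close>)
        then show ?thesis by simp
      next
        case False
        have sub1: "{s<..L/2} \<subseteq> Omega L" "{s..L/2} \<subseteq> Omega L" using F1 False by (auto simp: Omega_def)
        have "(\<integral>x. indicator {s<..} x * f x \<partial>lebesgue) = (LINT x:{s<..L/2}|lebesgue. D x)"
          unfolding set_lebesgue_integral_def f_def
          by (rule Bochner_Integration.integral_cong) (use F1 False in \<open>auto simp: Omega_def split: split_indicator\<close>)
        also have "\<dots> = (LINT x:{s..L/2}|lebesgue. D x)"
        proof (rule set_integral_cong_set)
          show "set_borel_measurable lebesgue {s..L/2} D"
            using set_integrable_subset[OF iD _ sub1(2)] unfolding set_integrable_def set_borel_measurable_def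
            by (simp add: borel_measurable_integrable)
          show "set_borel_measurable lebesgue {s<..L/2} D"
            using set_integrable_subset[OF iD _ sub1(1)] unfolding set_integrable_def set_borel_measurable_def
            by (simp add: borel_measurable_integrable)
          have "AE x in lborel. x \<notin> {s}" by (rule AE_not_in) (rule finite_imp_null_set_lborel, simp)
          then have "AE x in lebesgue. x \<notin> {s}" by (rule AE_completion)
          then show "AE x in lebesgue. (x \<in> {s..L/2}) = (x \<in> {s<..L/2})"
            by eventually_elim auto
        qed
        also have "\<dots> = 0" using Ia[of s] F1 False by simp
        finally show ?thesis .
      qed
    qed
    finally show ?thesis .
  qed
  define M where "M = density lborel (\<lambda>x. ennreal (g x))"
  define N where "N = density lborel (\<lambda>x. ennreal (- g x))"
  have eM: "emeasure M S = (\<integral>\<^sup>+x. ennreal (indicator S x * g x) \<partial>lborel)" if "S \<in> sets borel" for S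
    unfolding M_def using that mg
    by (subst emeasure_density) (auto intro!: nn_integral_cong split: split_indicator)
  have eN: "emeasure N S = (\<integral>\<^sup>+x. ennreal (- (indicator S x * g x)) \<partial>lborel)" if "S \<in> sets borel" for S
    unfolding N_def using that mg
    by (subst emeasure_density) (auto intro!: nn_integral_cong split: split_indicator)
  have iS: "integrable lborel (\<lambda>x. indicator S x * g x)" if "S \<in> sets borel" for S
    using integrable_mult_indicator[of S lborel g] ig that by simp
  have "M = N"
  proof (rule measure_eqI_lessThan)
    show "sets M = sets borel" "sets N = sets borel" by (simp_all add: M_def N_def)
    fix s
    show "emeasure M {s<..} = emeasure N {s<..}"
      using integral_zero_iff_nn[OF iS[of "{s<..}"]] half[of s] eM[of "{s<..}"] eN[of "{s<..}"] by simp
    have "(\<integral>\<^sup>+x. ennreal (indicator {s<..} x * g x) \<partial>lborel) < \<infinity>"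
    proof -
      have "(\<integral>\<^sup>+x. ennreal (norm (indicator {s<..} x * g x)) \<partial>lborel) < \<infinity>"
        using iS[of "{s<..}"] unfolding integrable_iff_bounded by simp
      then show ?thesis by (rule le_less_trans[OF nn_integral_mono, rotated]) (simp add: ennreal_leI)
    qed
    then show "emeasure M {s<..} < \<infinity>" using eM[of "{s<..}"] by simp
  qed
  have allS: "(LINT x:S|lborel. g x) = (LINT x:S|lborel. 0)" if "S \<in> sets lborel" for S
  proof -
    have S: "S \<in> sets borel" using that by simp
    have "(\<integral>x. indicator S x * g x \<partial>lborel) = 0"
      using integral_zero_iff_nn[OF iS[OF S]] \<open>M = N\<close> eM[OF S] eN[OF S] by simp
    then show ?thesis unfolding set_lebesgue_integral_def by simp
  qed
  have "AE x in lborel. g x = 0"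
    by (rule density_unique_real[OF ig integrable_zero allS])
  then have "AE x in lebesgue. g x = 0" by (rule AE_completion)
  then show ?thesis using fgL by eventually_elim (auto simp: f_def)
qed

lemma fourier_coeff_zero:
  "fourier_coeff L f 0 = complex_of_real (LINT x:Omega L|lebesgue. f x)"
  unfolding fourier_coeff_E by (simp add: set_integral_complex_of_real)

lemma fourier_coeff_diff:
  assumes L: "L > 0" and i1: "set_integrable lebesgue (Omega L) f" and i2: "set_integrable lebesgue (Omega L) g"
  shows "fourier_coeff L (\<lambda>x. f x - g x) k = fourier_coeff L f k - fourier_coeff L g k"
proof -
  have j1: "set_integrable lebesgue (Omega L) (\<lambda>x. complex_of_real (f x) * E L k x)"
    using set_integrable_scaleR_bounded[OF i1 cont_meas[OF E_cont[OF L]], where B=1] by (simp add: scaleR_conv_of_real)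
  have j2: "set_integrable lebesgue (Omega L) (\<lambda>x. complex_of_real (g x) * E L k x)"
    using set_integrable_scaleR_bounded[OF i2 cont_meas[OF E_cont[OF L]], where B=1] by (simp add: scaleR_conv_of_real)
  show ?thesis
    unfolding fourier_coeff_E using set_integral_diff(2)[OF j1 j2] by (simp add: left_diff_distrib)
qed

lemma measure_Omega: "L > 0 \<Longrightarrow> measure lebesgue (Omega L) = L"
  unfolding Omega_def by (subst measure_completion) (auto simp: measure_lborel_Ioc)

lemma conv_periodic:
  assumes "periodic L W" shows "periodic L (conv L W u)"
  unfolding periodic_def conv_def
proof
  fix x
  have "W (x + L - y) = W (x - y)" for y
    using assms unfolding periodic_def by (metis add.commute add_diff_eq)
  then show "(LINT y:Omega L|lebesgue. W (x + L - y) * u y) = (LINT y:Omega L|lebesgue. W (x - y) * u y)" by simp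
qed

lemma main_one_kernel:
  assumes L: "L > 0" and H2: "H2_per L W" and pW: "periodic L W"
    and C2u: "C2 u" and pu: "periodic L u" and upos: "\<forall>x\<in>Omega L. u x > 0"
    and hyp: "\<forall>x\<in>Omega L. ((\<lambda>y. deriv u y + u y * deriv (conv L W u) y) has_real_derivative 0) (at x)"
  shows "set_integrable lebesgue (Omega L) W"
    and "continuous_on UNIV (conv L W u)"
    and "\<forall>x\<in>{-L/2..L/2}. ln (u x) + conv L W u x = ln (u (-L/2)) + conv L W u (-L/2)"
proof -
  show iW: "set_integrable lebesgue (Omega L) W"
    using H2 unfolding H2_per_def by (intro L2_imp_integrable) blast
  have du: "(u has_real_derivative deriv u s) (at s)" for s
    using C2u unfolding C2_def by (simp add: DERIV_deriv_iff_real_differentiable)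
  have du1: "(deriv u has_real_derivative deriv (deriv u) s) (at s)" for s
    using C2u unfolding C2_def by (simp add: DERIV_deriv_iff_real_differentiable)
  have cu1: "continuous_on UNIV (deriv u)"
    using du1 by (meson DERIV_isCont continuous_at_imp_continuous_on)
  have pu1: "periodic L (deriv u)"
    unfolding periodic_def
  proof
    fix x
    have "((\<lambda>y. u (y + L)) has_real_derivative deriv u (x + L)) (at x)"
      using du[of "x + L"] by (simp add: DERIV_shift)
    moreover have "(\<lambda>y. u (y + L)) = u" using pu unfolding periodic_def by auto
    ultimately have "(u has_real_derivative deriv u (x + L)) (at x)" by simp
    then show "deriv u (x + L) = deriv u x" using DERIV_imp_deriv by metis
  qed
  have dV: "(conv L W u has_real_derivative (LINT z:Omega L|lebesgue. W z * deriv u (x - z))) (at x)" for x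
    by (rule conv_has_derivative[OF L pW iW du cu1 pu pu1])
  then have dV': "(conv L W u has_real_derivative deriv (conv L W u) x) (at x)" for x
    using DERIV_imp_deriv by metis
  show "continuous_on UNIV (conv L W u)"
    using dV' by (meson DERIV_isCont continuous_at_imp_continuous_on)
  show "\<forall>x\<in>{-L/2..L/2}. ln (u x) + conv L W u x = ln (u (-L/2)) + conv L W u (-L/2)"
    by (rule flux_argument[OF L du pu upos dV' conv_periodic[OF pW] hyp])
qed

theorem mainTheorem1:
  fixes L :: real and W W0 u :: "real \<Rightarrow> real"
  assumes "L > 0"
    and "H2_per L W" and "H2_per L W0"
    and "periodic L W" and "periodic L W0"
    and "even_fun W" and "even_fun W0"
    and "(LINT x:Omega L|lebesgue. W x) = (LINT x:Omega L|lebesgue. W0 x)"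
    and "C2 u" and "periodic L u"
    and "\<forall>x\<in>Omega L. u x > 0"
    and "(LINT x:Omega L|lebesgue. u x) = 1"
    and "\<forall>x\<in>Omega L. ((\<lambda>y. deriv u y + u y * deriv (conv L W u) y) has_real_derivative 0) (at x)"
    and "\<forall>x\<in>Omega L. ((\<lambda>y. deriv u y + u y * deriv (conv L W0 u) y) has_real_derivative 0) (at x)"
  shows "(\<forall>x\<in>Omega L. conv L W u x = conv L W0 u x)
       \<and> (\<forall>k::int. fourier_coeff L u k \<noteq> 0 \<longrightarrow> fourier_coeff L W k = fourier_coeff L W0 k)
       \<and> ((\<forall>k::int. k \<noteq> 0 \<longrightarrow> fourier_coeff L u k \<noteq> 0) \<longrightarrow>
            (AE x in lebesgue. x \<in> Omega L \<longrightarrow> W x = W0 x))"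
proof -
  note L = assms(1)
  note k1 = main_one_kernel[OF L assms(2) assms(4) assms(9) assms(10) assms(11) assms(13)]
  note k2 = main_one_kernel[OF L assms(3) assms(5) assms(9) assms(10) assms(11) assms(14)]
  have iW: "set_integrable lebesgue (Omega L) W" by (rule k1(1))
  have iW0: "set_integrable lebesgue (Omega L) W0" by (rule k2(1))
  have cu: "continuous_on UNIV u"
    using assms(9) unfolding C2_def by (meson differentiable_imp_continuous_within continuous_at_imp_continuous_on)
  define V where "V = conv L W u"
  define V0 where "V0 = conv L W0 u"
  define K where "K = V (-L/2) - V0 (-L/2)"
  have VK: "V x - V0 x = K" if "x \<in> Omega L" for x
  proof -
    have x: "x \<in> {-L/2..L/2}" using that by (auto simp: Omega_def)
    show ?thesis using k1(3)[rule_format, OF x] k2(3)[rule_format, OF x] unfolding K_def V_def V0_def by simp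
  qed
  have iV: "set_integrable lebesgue (Omega L) V"
    unfolding V_def Omega_def by (rule cont_integrable_Ioc[OF k1(2)])
  have iV0: "set_integrable lebesgue (Omega L) V0"
    unfolding V0_def Omega_def by (rule cont_integrable_Ioc[OF k2(2)])
  have FV: "fourier_coeff L V k = fourier_coeff L W k * fourier_coeff L u k" for k
    unfolding V_def by (rule fourier_conv[OF L assms(4) iW cu assms(10)])
  have FV0: "fourier_coeff L V0 k = fourier_coeff L W0 k * fourier_coeff L u k" for k
    unfolding V0_def by (rule fourier_conv[OF L assms(5) iW0 cu assms(10)])
  have W00: "fourier_coeff L W 0 = fourier_coeff L W0 0"
    unfolding fourier_coeff_zero using assms(8) by simp
  have "complex_of_real (LINT x:Omega L|lebesgue. V x) = complex_of_real (LINT x:Omega L|lebesgue. V0 x)"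
    using FV[of 0] FV0[of 0] W00 unfolding fourier_coeff_zero by simp
  then have eqint: "(LINT x:Omega L|lebesgue. V x) = (LINT x:Omega L|lebesgue. V0 x)" by simp
  have "(LINT x:Omega L|lebesgue. V x - V0 x) = (LINT x:Omega L|lebesgue. K)"
    by (rule set_lebesgue_integral_cong) (auto simp: VK)
  also have "\<dots> = L * K"
  proof -
    have fin: "emeasure lebesgue (Omega L) \<noteq> \<infinity>" using fmeasurableD2[OF Omega_lmeas] by simp
    show ?thesis using set_integral_const[OF Omega_sets fin, of K] measure_Omega[OF L] by simp
  qed
  finally have "L * K = 0" using set_integral_diff(2)[OF iV iV0] eqint by simp
  then have K0: "K = 0" using L by simp
  have part1: "\<forall>x\<in>Omega L. conv L W u x = conv L W0 u x"
    using VK K0 unfolding V_def V0_def by simp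
  have FVV0: "fourier_coeff L V k = fourier_coeff L V0 k" for k
    unfolding fourier_coeff_def
    by (rule set_lebesgue_integral_cong) (use part1 in \<open>auto simp: V_def V0_def\<close>)
  have part2: "\<forall>k::int. fourier_coeff L u k \<noteq> 0 \<longrightarrow> fourier_coeff L W k = fourier_coeff L W0 k"
    using FV FV0 FVV0 by (metis mult_cancel_right)
  have part3: "(\<forall>k::int. k \<noteq> 0 \<longrightarrow> fourier_coeff L u k \<noteq> 0) \<longrightarrow>
            (AE x in lebesgue. x \<in> Omega L \<longrightarrow> W x = W0 x)"
  proof
    assume nz: "\<forall>k::int. k \<noteq> 0 \<longrightarrow> fourier_coeff L u k \<noteq> 0"
    define D where "D x = W x - W0 x" for x
    have iD: "set_integrable lebesgue (Omega L) D" unfolding D_def using set_integral_diff(1)[OF iW iW0] .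
    have F0: "fourier_coeff L D m = 0" for m
    proof -
      have "fourier_coeff L W m = fourier_coeff L W0 m"
        using part2 nz W00 by (cases "m = 0") auto
      then show ?thesis unfolding D_def fourier_coeff_diff[OF L iW iW0] by simp
    qed
    have I0: "(LINT x:Omega L|lebesgue. D x) = 0"
      unfolding D_def using set_integral_diff(2)[OF iW iW0] assms(8) by simp
    have "AE x in lebesgue. x \<in> Omega L \<longrightarrow> D x = 0"
      by (rule AE_zero_from_intervals[OF L iD I0 interval_integral_zero[OF L iD F0]])
    then show "AE x in lebesgue. x \<in> Omega L \<longrightarrow> W x = W0 x"
      by eventually_elim (simp add: D_def)
  qed
  show ?thesis using part1 part2 part3 by blast
qed

end
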